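(* Let $p$ be an odd prime and $\alpha$ an integer with $1\le\alpha<p$. Let $a,b,c$ be non-zero integers with $\gcd(a,b,c)=1$ satisfying $a^p+2^\alpha b^p+c^p=0$ and normalized so that $a\equiv -1 \pmod 4$. Put $A=a^p$, $B=2^\alpha b^p$, and let $E$ be the elliptic curve over $\mathbb{Q}$ given by $y^2=x(x-A)(x+B)$. If $(a,b,c)\neq(-1,1,-1)$, then $E$ has multiplicative reduction at some prime $q\neq 2$. *)

theory Defs
  imports Complex_Main "HOL-Number_Theory.Cong"
begin

text \<open>Weierstrass models y^2 + a1 xy + a3 y = x^3 + a2 x^2 + a4 x + a6 over the rationals,
  with the standard invariants (Silverman, III.1).\<close>

record wmodel =
  wa1 :: rat
  wa2 :: rat
  wa3 :: rat
  wa4 :: rat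
  wa6 :: rat

definition wb2 :: "wmodel \<Rightarrow> rat" where "wb2 W = wa1 W ^ 2 + 4 * wa2 W"
definition wb4 :: "wmodel \<Rightarrow> rat" where "wb4 W = 2 * wa4 W + wa1 W * wa3 W"
definition wb6 :: "wmodel \<Rightarrow> rat" where "wb6 W = wa3 W ^ 2 + 4 * wa6 W"
definition wb8 :: "wmodel \<Rightarrow> rat" where
  "wb8 W = wa1 W ^ 2 * wa6 W + 4 * wa2 W * wa6 W - wa1 W * wa3 W * wa4 W
           + wa2 W * wa3 W ^ 2 - wa4 W ^ 2"
definition wc4 :: "wmodel \<Rightarrow> rat" where "wc4 W = wb2 W ^ 2 - 24 * wb4 W"
definition wdisc :: "wmodel \<Rightarrow> rat" where
  "wdisc W = - (wb2 W ^ 2) * wb8 W - 8 * wb4 W ^ 3 - 27 * wb6 W ^ 2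
             + 9 * wb2 W * wb4 W * wb6 W"

text \<open>Admissible change of variables x = u^2 x' + r, y = u^3 y' + s u^2 x' + t (u \<noteq> 0).\<close>
definition wchange :: "wmodel \<Rightarrow> rat \<Rightarrow> rat \<Rightarrow> rat \<Rightarrow> rat \<Rightarrow> wmodel" where
  "wchange W u r s t =
     \<lparr> wa1 = (wa1 W + 2 * s) / u,
       wa2 = (wa2 W - s * wa1 W + 3 * r - s ^ 2) / u ^ 2,
       wa3 = (wa3 W + r * wa1 W + 2 * t) / u ^ 3,
       wa4 = (wa4 W - s * wa3 W + 2 * r * wa2 W - (t + r * s) * wa1 W + 3 * r ^ 2 - 2 * s * t) / u ^ 4,
       wa6 = (wa6 W + r * wa4 W + r ^ 2 * wa2 W + r ^ 3 - t * wa3 W - t ^ 2 - r * t * wa1 W) / u ^ 6 \<rparr>"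

definition qint :: "nat \<Rightarrow> rat \<Rightarrow> bool" where
  "qint q x \<longleftrightarrow> (\<exists>n d :: int. d \<noteq> 0 \<and> \<not> int q dvd d \<and> x = of_int n / of_int d)"

definition qint_model :: "nat \<Rightarrow> wmodel \<Rightarrow> bool" where
  "qint_model q W \<longleftrightarrow> qint q (wa1 W) \<and> qint q (wa2 W) \<and> qint q (wa3 W)
                     \<and> qint q (wa4 W) \<and> qint q (wa6 W)"

text \<open>Minimal at q: q-integral, and v_q of the discriminant is minimal among all
  q-integral models obtained by admissible changes of variables
  (v_q(\<Delta>) \<le> v_q(\<Delta>') expressed as: \<Delta>'/\<Delta> is q-integral).\<close>
definition minimal_at :: "nat \<Rightarrow> wmodel \<Rightarrow> bool" where
  "minimal_at q W \<longleftrightarrow> qint_model q W \<and>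
     (\<forall>u r s t. u \<noteq> 0 \<longrightarrow> qint_model q (wchange W u r s t) \<longrightarrow>
        qint q (wdisc (wchange W u r s t) / wdisc W))"

text \<open>The elliptic curve given by W (nonsingular: \<Delta> \<noteq> 0) has multiplicative reduction at q:
  a minimal model at q has q | \<Delta> and q \<nmid> c4 (reduction has a node).\<close>
definition multiplicative_reduction :: "nat \<Rightarrow> wmodel \<Rightarrow> bool" where
  "multiplicative_reduction q W \<longleftrightarrow> wdisc W \<noteq> 0 \<and>
     (\<exists>u r s t. u \<noteq> 0 \<and> minimal_at q (wchange W u r s t) \<and>
        qint q (wdisc (wchange W u r s t) / of_nat q) \<and>
        \<not> qint q (wc4 (wchange W u r s t) / of_nat q))"

text \<open>The curve y^2 = x(x - A)(x + B) = x^3 + (B - A) x^2 - A B x.\<close>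
definition frey_model :: "int \<Rightarrow> int \<Rightarrow> wmodel" where
  "frey_model A B = \<lparr> wa1 = 0, wa2 = of_int (B - A), wa3 = 0, wa4 = of_int (- A * B), wa6 = 0 \<rparr>"

end

theory Submission
  imports Defs "HOL-Computational_Algebra.Primes"
begin

lemma ch_b2: "u \<noteq> 0 \<Longrightarrow> wb2 (wchange W u r s t) = (wb2 W + 12*r)/u^2"
  apply (simp add: wb2_def wchange_def field_simps)  apply algebra? done
lemma ch_b4: "u \<noteq> 0 \<Longrightarrow> wb4 (wchange W u r s t) = (wb4 W + r * wb2 W + 6*r^2)/u^4"
  apply (simp add: wb2_def wb4_def wchange_def field_simps)  apply algebra? done
lemma ch_b6: "u \<noteq> 0 \<Longrightarrow> wb6 (wchange W u r s t) = (wb6 W + 2*r * wb4 W + r^2 * wb2 W + 4*r^3)/u^6"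
  apply (simp add: wb2_def wb4_def wb6_def wchange_def field_simps)  apply algebra? done
lemma ch_b8: "u \<noteq> 0 \<Longrightarrow> wb8 (wchange W u r s t) = (wb8 W + 3*r * wb6 W + 3*r^2 * wb4 W + r^3 * wb2 W + 3*r^4)/u^8"
  apply (simp add: wb2_def wb4_def wb6_def wb8_def wchange_def field_simps)  apply algebra? done
lemma ch_c4: "u \<noteq> 0 \<Longrightarrow> wc4 (wchange W u r s t) = wc4 W / u^4"
  apply (simp add: wc4_def ch_b2 ch_b4 field_simps)  apply algebra? done
lemma b8_rel: "4 * wb8 W = wb2 W * wb6 W - wb4 W ^ 2"
  by (simp add: wb2_def wb4_def wb6_def wb8_def algebra_simps power2_eq_square)
lemma disc_alt: "wdisc W = - (wb2 W ^ 2) * ((wb2 W * wb6 W - wb4 W ^ 2) / 4) - 8 * wb4 W ^ 3 - 27 * wb6 W ^ 2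
             + 9 * wb2 W * wb4 W * wb6 W"
  unfolding wdisc_def b8_rel[symmetric] by simp
lemma ch_disc: "u \<noteq> 0 \<Longrightarrow> wdisc (wchange W u r s t) = wdisc W / u^12"
  apply (simp add: disc_alt[of "wchange W u r s t"] disc_alt[of W] ch_b2 ch_b4 ch_b6 field_simps)  apply algebra? done


lemma qint_of_int: "prime q \<Longrightarrow> qint q (of_int n)"
  unfolding qint_def by (rule exI[of _ n], rule exI[of _ 1]) auto

lemma qint_numeral: "prime q \<Longrightarrow> qint q (numeral k)"
  using qint_of_int[of q "numeral k"] by simp

lemma qint_zero: "prime q \<Longrightarrow> qint q 0"
  using qint_of_int[of q 0] by simp

lemma qint_one: "prime q \<Longrightarrow> qint q 1"
  using qint_of_int[of q 1] by simp

lemma qint_add: assumes "prime q" "qint q x" "qint q y" shows "qint q (x + y)"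
proof -
  obtain n1 d1 where 1: "d1 \<noteq> 0" "\<not> int q dvd d1" "x = of_int n1 / of_int d1" using assms(2) qint_def by auto
  obtain n2 d2 where 2: "d2 \<noteq> 0" "\<not> int q dvd d2" "y = of_int n2 / of_int d2" using assms(3) qint_def by auto
  have p: "prime (int q)" using assms(1) by simp
  have "x + y = of_int (n1*d2 + n2*d1) / of_int (d1*d2)" using 1 2 by (simp add: field_simps)
  moreover have "\<not> int q dvd d1*d2" using 1 2 p by (simp add: prime_dvd_mult_iff)
  ultimately show ?thesis unfolding qint_def using 1 2 by (metis mult_eq_0_iff)
qed

lemma qint_mult: assumes "prime q" "qint q x" "qint q y" shows "qint q (x * y)"
proof -
  obtain n1 d1 where 1: "d1 \<noteq> 0" "\<not> int q dvd d1" "x = of_int n1 / of_int d1" using assms(2) qint_def by auto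
  obtain n2 d2 where 2: "d2 \<noteq> 0" "\<not> int q dvd d2" "y = of_int n2 / of_int d2" using assms(3) qint_def by auto
  have p: "prime (int q)" using assms(1) by simp
  have "x * y = of_int (n1*n2) / of_int (d1*d2)" using 1 2 by (simp add: field_simps)
  moreover have "\<not> int q dvd d1*d2" using 1 2 p by (simp add: prime_dvd_mult_iff)
  ultimately show ?thesis unfolding qint_def using 1 2 by (metis mult_eq_0_iff)
qed

lemma qint_uminus: assumes "qint q x" shows "qint q (- x)"
proof -
  obtain n1 d1 where 1: "d1 \<noteq> 0" "\<not> int q dvd d1" "x = of_int n1 / of_int d1" using assms qint_def by auto
  have "- x = of_int (- n1) / of_int d1" using 1 by simp
  thus ?thesis unfolding qint_def using 1 by blast
qed

lemma qint_diff: "prime q \<Longrightarrow> qint q x \<Longrightarrow> qint q y \<Longrightarrow> qint q (x - y)"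
  using qint_add[of q x "-y"] qint_uminus[of q y] by simp

lemma qint_power: "prime q \<Longrightarrow> qint q x \<Longrightarrow> qint q (x ^ n)"
  by (induction n) (auto intro: qint_mult qint_one)

lemma qint_c4: assumes "prime q" "qint_model q W" shows "qint q (wc4 W)"
  using assms unfolding qint_model_def wc4_def wb2_def wb4_def
  by (intro qint_diff qint_add qint_mult qint_power qint_numeral; simp add: assms)

lemma qint_u:
  assumes q: "prime q" and u: "u \<noteq> 0" and c: "\<not> int q dvd c"
    and h: "qint q (of_int c / u ^ 4)"
  shows "qint q (1 / u ^ 12)"
proof -
  have p: "prime (int q)" using q by simp
  obtain n d where nd: "quotient_of u = (n, d)" by (cases "quotient_of u") auto
  have ud: "u = of_int n / of_int d" using quotient_of_div[OF nd] .
  have d0: "d > 0" using quotient_of_denom_pos[OF nd] .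
  have cop: "coprime n d" using quotient_of_coprime[OF nd] .
  have n0: "n \<noteq> 0" using u ud by auto
  obtain m e where me: "e \<noteq> 0" "\<not> int q dvd e" "of_int c / u ^ 4 = of_int m / (of_int e :: rat)"
    using h qint_def by auto
  have "of_int c * of_int d ^ 4 / of_int n ^ 4 = of_int m / (of_int e :: rat)"
    using me(3) ud by (simp add: power_divide)
  hence "of_int c * of_int d ^ 4 * of_int e = of_int m * (of_int n ^ 4 :: rat)"
    using n0 me(1) d0 by (simp add: field_simps)
  hence eq: "c * d ^ 4 * e = m * n ^ 4" by (metis of_int_eq_iff of_int_mult of_int_power)
  have nq: "\<not> int q dvd n"
  proof
    assume qn: "int q dvd n"
    hence "int q dvd n ^ 4" using dvd_trans[OF qn dvd_power[of 4 n]] by simp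
    hence "int q dvd m * n ^ 4" by (rule dvd_mult)
    hence "int q dvd c * d ^ 4 * e" using eq by simp
    hence "int q dvd d" using p c me(2) by (simp add: prime_dvd_mult_iff prime_dvd_power_iff)
    hence "is_unit (int q)" using qn cop by (meson coprime_common_divisor)
    thus False using p not_prime_unit by blast
  qed
  have "1 / u ^ 12 = of_int (d ^ 12) / of_int (n ^ 12)" using ud by (simp add: power_divide)
  moreover have "\<not> int q dvd n ^ 12" using nq p by (simp add: prime_dvd_power_iff)
  ultimately show ?thesis unfolding qint_def using n0
    by (intro exI[of _ "d ^ 12"] exI[of _ "n ^ 12"]) simp
qed

lemma qint_div_q: "prime q \<Longrightarrow> int q dvd N \<Longrightarrow> qint q (of_int N / of_nat q)"
proof -
  assume q: "prime q" and d: "int q dvd N"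
  then obtain k where "N = int q * k" by blast
  hence "of_int N / of_nat q = (of_int k :: rat)" using q by (simp add: prime_gt_0_nat)
  thus ?thesis by (simp add: qint_of_int q)
qed

lemma not_qint_div_q: assumes q: "prime q" and d: "\<not> int q dvd N" shows "\<not> qint q (of_int N / of_nat q)"
proof
  assume "qint q (of_int N / of_nat q)"
  then obtain m e where me: "e \<noteq> 0" "\<not> int q dvd e" "of_int N / of_nat q = of_int m / (of_int e :: rat)"
    using qint_def by auto
  have "q > 0" using q by (simp add: prime_gt_0_nat)
  hence "of_int N * of_int e = of_int m * (of_int (int q) :: rat)" using me by (simp add: field_simps)
  hence "N * e = m * int q" by (metis of_int_eq_iff of_int_mult)
  hence "int q dvd N * e" by simp
  thus False using q d me(2) by (simp add: prime_dvd_mult_iff)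
qed



lemma frey_disc: "wdisc (frey_model A B) = of_int (16 * A^2 * B^2 * (A + B)^2)"
  by (simp add: wdisc_def wb2_def wb4_def wb6_def wb8_def frey_model_def) (simp add: algebra_simps power2_eq_square power3_eq_cube)

lemma frey_c4: "wc4 (frey_model A B) = of_int (16 * (A^2 + A*B + B^2))"
  by (simp add: wc4_def wb2_def wb4_def frey_model_def) (simp add: algebra_simps power2_eq_square)

lemma frey_id: "wchange (frey_model A B) 1 0 0 0 = frey_model A B"
  by (simp add: wchange_def frey_model_def)

lemma frey_mult:
  assumes q: "prime q" and D: "int q dvd 16 * A^2 * B^2 * (A + B)^2" and D0: "A * B * (A + B) \<noteq> 0"
    and C: "\<not> int q dvd 16 * (A^2 + A*B + B^2)"
  shows "multiplicative_reduction q (frey_model A B)"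
proof -
  let ?W = "frey_model A B"
  have dn: "wdisc ?W \<noteq> 0" using D0 by (simp add: frey_disc)
  have qm: "qint_model q ?W" 
    using qint_of_int[OF q, of "B - A"] qint_of_int[OF q, of "- A * B"] qint_zero[OF q]
    by (simp add: qint_model_def frey_model_def)
  have "minimal_at q ?W"
    unfolding minimal_at_def
  proof (intro conjI qm allI impI)
    fix u r s t :: rat
    assume u: "u \<noteq> 0" and m: "qint_model q (wchange ?W u r s t)"
    have "qint q (wc4 ?W / u ^ 4)" using qint_c4[OF q m] ch_c4[OF u] by simp
    hence "qint q (1 / u ^ 12)" using qint_u[OF q u C] by (simp add: frey_c4)
    thus "qint q (wdisc (wchange ?W u r s t) / wdisc ?W)" using ch_disc[OF u] dn by simp
  qed
  moreover have "qint q (wdisc ?W / of_nat q)" using qint_div_q[OF q D] by (simp add: frey_disc)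
  moreover have "\<not> qint q (wc4 ?W / of_nat q)" using not_qint_div_q[OF q C] by (simp add: frey_c4)
  ultimately show ?thesis unfolding multiplicative_reduction_def using dn
    by (intro conjI dn exI[of _ 1] exI[of _ 0]) (simp_all add: frey_id)
qed



lemma odd_prime_factor:
  fixes x :: int assumes "odd x" "\<bar>x\<bar> \<noteq> 1"
  shows "\<exists>q::nat. prime q \<and> q \<noteq> 2 \<and> int q dvd x"
proof -
  obtain r where r: "prime r" "r dvd x" using prime_factor_int[OF assms(2)] by blast
  have r0: "r \<ge> 0" using r(1) by (simp add: prime_ge_0_int)
  have "r \<noteq> 2" using r assms(1) by auto
  thus ?thesis using r r0 by (intro exI[of _ "nat r"]) auto
qed

lemma exists_q:
  fixes p \<alpha> :: nat and a b c :: int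
  assumes "odd p" "1 \<le> \<alpha>" "b \<noteq> 0"
    and eq: "a ^ p + 2 ^ \<alpha> * b ^ p + c ^ p = 0"
    and "[a = -1] (mod 4)"
    and ne: "(a, b, c) \<noteq> (-1, 1, -1)"
  shows "\<exists>q::nat. prime q \<and> q \<noteq> 2 \<and> (int q dvd a \<or> int q dvd c)"
proof -
  have am: "a mod 4 = 3" using assms(5) by (simp add: cong_def)
  have "a mod 2 = 1" using am mod_mod_cancel[of 2 4 a] by simp
  hence oa: "odd a" by (simp add: odd_iff_mod_2_eq_one)
  show ?thesis
  proof (cases "\<bar>a\<bar> = 1")
    case False thus ?thesis using odd_prime_factor[OF oa] by blast
  next
    case True
    hence a1: "a = -1" using am by (cases "a \<ge> 0") auto
    have pa: "a ^ p = -1" using a1 assms(1) by simp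
    have "even (2 ^ \<alpha> * b ^ p :: int)" using assms(2) by (simp add: Suc_le_eq)
    hence "odd (c ^ p)" using eq pa by (metis add.commute add_uminus_conv_diff diff_eq_eq even_add odd_one eq_neg_iff_add_eq_0 minus_add_cancel)
    hence oc: "odd c" using odd_pos[OF assms(1)] by auto
    show ?thesis
    proof (cases "\<bar>c\<bar> = 1")
      case False thus ?thesis using odd_prime_factor[OF oc] by blast
    next
      case True
      hence "c = 1 \<or> c = -1" by auto
      moreover have "c \<noteq> 1" using eq pa assms(3) by auto
      ultimately have c1: "c = -1" by blast
      have pc: "c ^ p = -1" using c1 assms(1) by simp
      have e2: "2 ^ \<alpha> * b ^ p = 2" using eq pa pc by simp
      have "\<bar>b\<bar> = 1"
      proof (rule ccontr)
        assume "\<bar>b\<bar> \<noteq> 1"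
        hence b2: "\<bar>b\<bar> \<ge> 2" using assms(3) by auto
        have p0: "p > 0" using assms(1) by (rule odd_pos)
        have "\<bar>b\<bar> \<le> \<bar>b\<bar> ^ p" using b2 p0 by (simp add: self_le_power)
        moreover have "(2::int) \<le> 2 ^ \<alpha>" using assms(2) by (metis power_one_right power_increasing one_le_numeral)
        ultimately have "2 * 2 \<le> (2::int) ^ \<alpha> * \<bar>b\<bar> ^ p" using b2 by (intro mult_mono) auto
        also have "... = \<bar>2 ^ \<alpha> * b ^ p\<bar>" by (simp add: abs_mult power_abs)
        finally show False using e2 by simp
      qed
      hence "b = 1 \<or> b = -1" by auto
      moreover have "b \<noteq> -1"
      proof
        assume "b = -1"
        with e2 assms(1) have "-(2^\<alpha>) = (2::int)" by simp
        moreover have "(0::int) < 2^\<alpha>" by simp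
        ultimately show False by linarith
      qed
      ultimately have "b = 1" by blast
      thus ?thesis using ne a1 c1 by simp
    qed
  qed
qed

lemma nodiv_abs:
  fixes A B C Q :: int
  assumes q: "prime Q" and s: "A + B + C = 0" and n3: "\<not> (Q dvd A \<and> Q dvd B \<and> Q dvd C)"
    and ac: "Q dvd A \<or> Q dvd C"
  shows "\<not> Q dvd A^2 + A*B + B^2"
proof
  assume h: "Q dvd A^2 + A*B + B^2"
  show False using ac
  proof
    assume qa: "Q dvd A"
    have "Q dvd A * (A + B)" using qa by simp
    hence "Q dvd (A^2 + A*B + B^2) - A * (A + B)" using h dvd_diff by blast
    hence "Q dvd B^2" by (simp add: algebra_simps power2_eq_square)
    hence qb: "Q dvd B" using q prime_dvd_power by blast
    have "C = - A - B" using s by simp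
    hence "Q dvd C" using qa qb by simp
    thus False using n3 qa qb by blast
  next
    assume qc: "Q dvd C"
    have ab: "A + B = - C" using s by simp
    have "Q dvd (A + B)^2" using qc ab by (simp add: power2_eq_square)
    hence "Q dvd (A + B)^2 - (A^2 + A*B + B^2)" using h dvd_diff by blast
    hence "Q dvd A * B" by (simp add: algebra_simps power2_eq_square)
    hence "Q dvd A \<or> Q dvd B" using q prime_dvd_mult_iff by blast
    moreover have "A = - C - B" "B = - C - A" using s by auto
    ultimately show False using n3 qc by (metis dvd_diff dvd_minus_iff diff_minus_eq_add minus_diff_eq)
  qed
qed


theorem mainTheorem4:
  fixes p \<alpha> :: nat and a b c :: int
  assumes "prime p" and "odd p"
    and "1 \<le> \<alpha>" and "\<alpha> < p"
    and "a \<noteq> 0" and "b \<noteq> 0" and "c \<noteq> 0"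
    and "gcd (gcd a b) c = 1"
    and "a ^ p + 2 ^ \<alpha> * b ^ p + c ^ p = 0"
    and "[a = -1] (mod 4)"
    and "(a, b, c) \<noteq> (-1, 1, -1)"
  shows "\<exists>q::nat. prime q \<and> q \<noteq> 2 \<and>
           multiplicative_reduction q (frey_model (a ^ p) (2 ^ \<alpha> * b ^ p))"
proof -
  obtain q :: nat where q: "prime q" "q \<noteq> 2" "int q dvd a \<or> int q dvd c"
    using exists_q[OF assms(2,3,6,9,10,11)] by blast
  define Q where "Q = int q"
  have pQ: "prime Q" using q(1) Q_def by simp
  have Q2: "Q \<noteq> 2" using q(2) Q_def by simp
  have p0: "p > 0" using assms(2) by (rule odd_pos)
  define A where "A = a ^ p"
  define B where "B = 2 ^ \<alpha> * b ^ p"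
  define C where "C = c ^ p"
  have s: "A + B + C = 0" using assms(9) A_def B_def C_def by simp
  have Q2a: "\<not> Q dvd 2 ^ \<alpha>"
  proof
    assume "Q dvd 2 ^ \<alpha>"
    hence "Q dvd 2" using pQ prime_dvd_power by blast
    hence "Q = 2" using pQ by (intro primes_dvd_imp_eq) auto
    thus False using Q2 by simp
  qed
  have dA: "Q dvd A \<longleftrightarrow> Q dvd a" using pQ p0 A_def by (simp add: prime_dvd_power_iff)
  have dB: "Q dvd B \<longleftrightarrow> Q dvd b" using pQ p0 B_def Q2a by (simp add: prime_dvd_power_iff prime_dvd_mult_iff)
  have dC: "Q dvd C \<longleftrightarrow> Q dvd c" using pQ p0 C_def by (simp add: prime_dvd_power_iff)
  have n3: "\<not> (Q dvd A \<and> Q dvd B \<and> Q dvd C)"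
  proof
    assume "Q dvd A \<and> Q dvd B \<and> Q dvd C"
    hence "Q dvd gcd (gcd a b) c" using dA dB dC by simp
    hence "Q dvd 1" using assms(8) by simp
    thus False using pQ not_prime_unit by blast
  qed
  have ac: "Q dvd A \<or> Q dvd C" using q(3) dA dC Q_def by auto
  have nQ: "\<not> Q dvd A^2 + A*B + B^2" by (rule nodiv_abs[OF pQ s n3 ac])
  have Q16: "\<not> Q dvd 16"
  proof
    assume "Q dvd 16"
    hence "Q dvd 2 ^ 4" by simp
    hence "Q dvd 2" using pQ prime_dvd_power by blast
    hence "Q = 2" using pQ by (intro primes_dvd_imp_eq) auto
    thus False using Q2 by simp
  qed
  have C': "\<not> int q dvd 16 * (A^2 + A*B + B^2)" using nQ Q16 pQ Q_def prime_dvd_mult_iff by metis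
  have AB: "A + B = - C" using s by simp
  have "Q dvd A * B * (A + B)" using ac AB by auto
  hence D: "int q dvd 16 * A^2 * B^2 * (A + B)^2" unfolding Q_def
    by (metis dvd_mult dvd_mult2 power2_eq_square mult.assoc mult.commute)
  have D0: "A * B * (A + B) \<noteq> 0" using AB assms(5,6,7) A_def B_def C_def by simp
  have "multiplicative_reduction q (frey_model A B)" by (rule frey_mult[OF q(1) D D0 C'])
  thus ?thesis using q A_def B_def by blast
qed

end
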